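(* Let $\boldsymbol X \in \mathbb{R}^{n\times d}$, $\boldsymbol y \in \mathbb{R}^n$, $\boldsymbol M = \boldsymbol X^\top \boldsymbol X$, $\boldsymbol r = \boldsymbol X^\top \boldsymbol y$. Assume (A1) $\boldsymbol r > \mathbf 0$ and (A2) $M_{ij}\le 0$ for all $i\neq j$. Let $\boldsymbol C>\mathbf 0$, $\boldsymbol k>\mathbf 0$ in $\mathbb{R}^d$, and for $\varepsilon>0$ let $\boldsymbol\theta^{(\varepsilon)}(t)$ solve $$\frac{\mathrm d \theta_i}{\mathrm d t} = \theta_i\Big(r_i - \sum_{j=1}^d M_{ij}\theta_j\Big),\quad i=1,\dots,d,$$ with $\boldsymbol\theta^{(\varepsilon)}(0) = (C_1\varepsilon^{k_1},\dots,C_d\varepsilon^{k_d})$. Then there exists $\varepsilon_0>0$ such that for all $\varepsilon\in(0,\varepsilon_0]$ and all $i\in\{1,\dots,d\}$, $t\mapsto\theta_i^{(\varepsilon)}(t)$ is nondecreasing on $[0,\infty)$.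
   Context: Vector inequalities are coordinatewise. *)

theory Defs
  imports "HOL-Analysis.Analysis"
begin

definition lv_field :: "real^'d^'d \<Rightarrow> real^'d \<Rightarrow> real^'d \<Rightarrow> real^'d" where
  "lv_field M r \<theta> = (\<chi> i. \<theta> $ i * (r $ i - (\<Sum>j\<in>UNIV. M $ i $ j * \<theta> $ j)))"

definition solves_lv :: "real^'d^'d \<Rightarrow> real^'d \<Rightarrow> real^'d \<Rightarrow> (real \<Rightarrow> real^'d) \<Rightarrow> bool" where
  "solves_lv M r \<theta>0 \<theta> \<longleftrightarrow> \<theta> 0 = \<theta>0 \<and>
     (\<forall>t\<ge>0. (\<theta> has_vector_derivative lv_field M r (\<theta> t)) (at t within {0..}))"

end

theory Submission
  imports Defs
begin

lemma comp_deriv: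
  assumes "(\<theta> has_vector_derivative lv_field M r (\<theta> t)) (at t within S)"
  shows "((\<lambda>t. \<theta> t $ i) has_real_derivative
           (\<theta> t $ i * (r $ i - (\<Sum>j\<in>UNIV. M $ i $ j * \<theta> t $ j)))) (at t within S)"
proof -
  have "((\<lambda>t. \<theta> t $ i) has_vector_derivative (lv_field M r (\<theta> t)) $ i) (at t within S)"
    by (rule bounded_linear.has_vector_derivative[OF bounded_linear_vec_nth assms])
  then show ?thesis
    by (simp add: has_real_derivative_iff_has_vector_derivative lv_field_def)
qed

lemma incr_helper:
  fixes f f' :: "real \<Rightarrow> real"
  assumes "a \<le> b" "0 \<le> a"
    and d: "\<And>x. a \<le> x \<Longrightarrow> x \<le> b \<Longrightarrow> (f has_real_derivative f' x) (at x within {0..})"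
    and n: "\<And>x. a < x \<Longrightarrow> x < b \<Longrightarrow> f' x \<ge> 0"
  shows "f a \<le> f b"
proof (rule DERIV_nonneg_imp_increasing_open[OF assms(1)])
  fix x assume x: "a < x" "x < b"
  have "(f has_real_derivative f' x) (at x within {0<..})"
    by (rule DERIV_subset[OF d[of x]]) (use x in auto)
  then have "(f has_real_derivative f' x) (at x)"
    using x assms(2) at_within_open[of x "{0<..}"] by simp
  then show "\<exists>y. (f has_real_derivative y) (at x) \<and> y \<ge> 0" using n x by blast
next
  show "continuous_on {a..b} f"
  proof (clarsimp simp: continuous_on_eq_continuous_within)
    fix x assume "a \<le> x" "x \<le> b"
    then have "continuous (at x within {0..}) f" using d by (blast intro: DERIV_continuous)
    then show "continuous (at x within {a..b}) f"
      by (rule continuous_within_subset) (use assms in auto)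
  qed
qed


lemma main_inv:
  fixes M :: "real^'d^'d" and r \<theta>0 :: "real^'d" and \<theta> :: "real \<Rightarrow> real^'d"
  assumes off: "\<forall>i j. i \<noteq> j \<longrightarrow> M $ i $ j \<le> 0"
    and p0: "\<forall>i. \<theta>0 $ i > 0"
    and g0: "\<forall>i. r $ i - (\<Sum>j\<in>UNIV. M $ i $ j * \<theta>0 $ j) > 0"
    and sol: "solves_lv M r \<theta>0 \<theta>"
  shows "\<forall>t\<ge>0. \<forall>i. \<theta> t $ i > 0 \<and> r $ i - (\<Sum>j\<in>UNIV. M $ i $ j * \<theta> t $ j) > 0"
proof -
  define g where "g t i = r $ i - (\<Sum>j\<in>UNIV. M $ i $ j * \<theta> t $ j)" for t i
  have th0: "\<theta> 0 = \<theta>0" using sol unfolding solves_lv_def by auto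
  have dth: "((\<lambda>t. \<theta> t $ i) has_real_derivative \<theta> t $ i * g t i) (at t within {0..})"
    if "t \<ge> 0" for t i
    using comp_deriv[of \<theta> M r t "{0..}" i] sol that unfolding solves_lv_def g_def by auto
  have dg: "((\<lambda>t. g t i) has_real_derivative - (\<Sum>j\<in>UNIV. M $ i $ j * (\<theta> t $ j * g t j)))
       (at t within {0..})" if "t \<ge> 0" for t i
  proof -
    have "((\<lambda>t. \<Sum>j\<in>UNIV. M $ i $ j * \<theta> t $ j) has_real_derivative
        (\<Sum>j\<in>UNIV. M $ i $ j * (\<theta> t $ j * g t j))) (at t within {0..})"
      by (rule DERIV_sum, rule DERIV_cmult, rule dth[OF that])
    from DERIV_diff[OF DERIV_const this]
    have "((\<lambda>t. r $ i - (\<Sum>j\<in>UNIV. M $ i $ j * \<theta> t $ j)) has_real_derivative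
        - (\<Sum>j\<in>UNIV. M $ i $ j * (\<theta> t $ j * g t j))) (at t within {0..})" by simp
    then show ?thesis unfolding g_def[symmetric] by simp
  qed
  have cth: "continuous_on {0..} (\<lambda>t. \<theta> t $ i)" for i
    unfolding continuous_on_eq_continuous_within using dth by (blast intro: DERIV_continuous)
  have cg: "continuous_on {0..} (\<lambda>t. g t i)" for i
    unfolding continuous_on_eq_continuous_within using dg by (blast intro: DERIV_continuous)
  define S where "S = (\<Union>i. ({0..} \<inter> (\<lambda>t. \<theta> t $ i) -` {..0}) \<union> ({0..} \<inter> (\<lambda>t. g t i) -` {..0}))"
  have closedS: "closed S" unfolding S_def
    by (intro closed_UN ballI closed_Un continuous_closed_preimage cth cg closed_atLeast closed_atMost) auto
  have key: "S = {}"
  proof (rule ccontr)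
    assume ne: "S \<noteq> {}"
    define \<tau> where "\<tau> = Inf S"
    have bdd: "bdd_below S" unfolding S_def bdd_below_def by auto
    have \<tau>S: "\<tau> \<in> S" using closed_contains_Inf[OF ne bdd closedS] \<tau>_def by simp
    have \<tau>0: "\<tau> \<ge> 0" using \<tau>S unfolding S_def by auto
    have notS: "t \<notin> S" if "t < \<tau>" for t
      using cInf_lower[OF _ bdd] that \<tau>_def by force
    have posb: "\<theta> t $ i > 0 \<and> g t i > 0" if "0 \<le> t" "t < \<tau>" for t i
      using notS[OF that(2)] that(1) unfolding S_def by (auto simp: not_le)
    have mon: "\<theta> s $ i \<le> \<theta> t $ i" if "0 \<le> s" "s \<le> t" "t \<le> \<tau>" for s t i
    proof (rule incr_helper[where f="\<lambda>t. \<theta> t $ i" and f'="\<lambda>t. \<theta> t $ i * g t i"])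
      show "s \<le> t" "0 \<le> s" by fact+
      show "((\<lambda>t. \<theta> t $ i) has_real_derivative \<theta> x $ i * g x i) (at x within {0..})"
        if "s \<le> x" "x \<le> t" for x using dth that \<open>0 \<le> s\<close> by auto
      show "0 \<le> \<theta> x $ i * g x i" if "s < x" "x < t" for x
        using posb[of x i] that \<open>0 \<le> s\<close> \<open>t \<le> \<tau>\<close> by auto
    qed
    have th: "\<theta> \<tau> $ i > 0" for i
    proof -
      have "\<theta> 0 $ i > 0" using p0 th0 by simp
      moreover have "\<theta> 0 $ i \<le> \<theta> \<tau> $ i" using mon[of 0 \<tau> i] \<tau>0 by simp
      ultimately show ?thesis by linarith
    qed
    have gpos: "g \<tau> i > 0" for i
    proof -
      define L where "L = \<bar>M $ i $ i\<bar> * \<theta> \<tau> $ i"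
      define h where "h t = exp (L * t) * g t i" for t
      define h' where "h' t = exp (L * t) * L * g t i
          + (- (\<Sum>j\<in>UNIV. M $ i $ j * (\<theta> t $ j * g t j))) * exp (L * t)" for t
      have dh: "(h has_real_derivative h' t) (at t within {0..})" if "t \<ge> 0" for t
      proof -
        have e: "((\<lambda>t. exp (L * t)) has_real_derivative exp (L * t) * L) (at t within {0..})"
          by (auto intro!: derivative_eq_intros)
        show ?thesis using DERIV_mult[OF e dg[OF that]] unfolding h_def[abs_def] h'_def by simp
      qed
      have hnn: "h' x \<ge> 0" if "0 < x" "x < \<tau>" for x
      proof -
        have split: "(\<Sum>j\<in>UNIV. M $ i $ j * (\<theta> x $ j * g x j))
            = M $ i $ i * (\<theta> x $ i * g x i) + (\<Sum>j\<in>UNIV - {i}. M $ i $ j * (\<theta> x $ j * g x j))"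
          by (simp add: sum.remove)
        have rest: "(\<Sum>j\<in>UNIV - {i}. M $ i $ j * (\<theta> x $ j * g x j)) \<le> 0"
        proof (rule sum_nonpos)
          fix j assume "j \<in> UNIV - {i}"
          then have "M $ i $ j \<le> 0" using off by auto
          moreover have "\<theta> x $ j * g x j \<ge> 0" using posb[of x j] that by auto
          ultimately show "M $ i $ j * (\<theta> x $ j * g x j) \<le> 0" by (simp add: mult_nonpos_nonneg)
        qed
        have pb: "\<theta> x $ i > 0" "g x i > 0" using posb[of x i] that by auto
        have mb: "\<theta> x $ i \<le> \<theta> \<tau> $ i" using mon[of x \<tau> i] that by auto
        have "M $ i $ i * (\<theta> x $ i * g x i) \<le> \<bar>M $ i $ i\<bar> * (\<theta> x $ i * g x i)"
          using pb by (intro mult_right_mono) auto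
        also have "\<dots> \<le> \<bar>M $ i $ i\<bar> * (\<theta> \<tau> $ i * g x i)"
          using pb mb by (intro mult_left_mono mult_right_mono) auto
        also have "\<dots> = L * g x i" unfolding L_def by simp
        finally have "(\<Sum>j\<in>UNIV. M $ i $ j * (\<theta> x $ j * g x j)) \<le> L * g x i"
          using split rest by linarith
        then have "0 \<le> L * g x i - (\<Sum>j\<in>UNIV. M $ i $ j * (\<theta> x $ j * g x j))" by simp
        then have "0 \<le> exp (L * x) * (L * g x i - (\<Sum>j\<in>UNIV. M $ i $ j * (\<theta> x $ j * g x j)))"
          by simp
        then show ?thesis unfolding h'_def by (simp add: algebra_simps)
      qed
      have "h 0 \<le> h \<tau>"
        by (rule incr_helper[where f=h and f'=h']) (use \<tau>0 dh hnn in auto)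
      moreover have "h 0 > 0" unfolding h_def g_def using th0 g0 by simp
      ultimately have "exp (L * \<tau>) * g \<tau> i > 0" unfolding h_def by simp
      then show ?thesis by (simp add: zero_less_mult_iff)
    qed
    have "\<tau> \<notin> S" unfolding S_def using th gpos by (auto simp: not_le)
    with \<tau>S show False by simp
  qed
  show ?thesis
  proof (intro allI impI)
    fix t :: real and i assume "t \<ge> 0"
    then have "t \<notin> S" using key by simp
    then show "\<theta> t $ i > 0 \<and> r $ i - (\<Sum>j\<in>UNIV. M $ i $ j * \<theta> t $ j) > 0"
      using \<open>t \<ge> 0\<close> unfolding S_def g_def by (auto simp: not_le)
  qed
qed


theorem lemma1:
  fixes X :: "real^'d^'n" and y :: "real^'n" and C k :: "real^'d"
  assumes A1: "\<forall>i. (transpose X *v y) $ i > 0"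
    and A2: "\<forall>i j. i \<noteq> j \<longrightarrow> (transpose X ** X) $ i $ j \<le> 0"
    and Cpos: "\<forall>i. C $ i > 0"
    and kpos: "\<forall>i. k $ i > 0"
  shows "\<exists>\<epsilon>0>0. \<forall>\<epsilon>. 0 < \<epsilon> \<and> \<epsilon> \<le> \<epsilon>0 \<longrightarrow>
           (\<forall>\<theta>. solves_lv (transpose X ** X) (transpose X *v y)
                    (\<chi> i. C $ i * \<epsilon> powr (k $ i)) \<theta> \<longrightarrow>
              (\<forall>i. mono_on {0..} (\<lambda>t. \<theta> t $ i)))"
proof -
  define M where "M = transpose X ** X"
  define r where "r = transpose X *v y"
  have lim: "((\<lambda>e. \<Sum>j\<in>UNIV. \<bar>M $ i $ j\<bar> * C $ j * e powr (k $ j)) \<longlongrightarrow> 0) (at_right 0)" for i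
  proof (rule tendsto_null_sum)
    fix j :: 'd
    have "((\<lambda>e::real. e powr (k $ j)) \<longlongrightarrow> 0) (at_right 0)"
      by (rule tendsto_zero_powrI[of _ _ _ "k $ j"])
        (use kpos eventually_at_right_less[of "0::real"] in \<open>auto elim: eventually_mono\<close>)
    then have "((\<lambda>e::real. (\<bar>M $ i $ j\<bar> * C $ j) * e powr (k $ j)) \<longlongrightarrow> (\<bar>M $ i $ j\<bar> * C $ j) * 0) (at_right 0)"
      by (intro tendsto_mult tendsto_const)
    then show "((\<lambda>e. \<bar>M $ i $ j\<bar> * C $ j * e powr (k $ j)) \<longlongrightarrow> 0) (at_right 0)" by simp
  qed
  have "\<forall>\<^sub>F e in at_right (0::real). \<forall>i. (\<Sum>j\<in>UNIV. \<bar>M $ i $ j\<bar> * C $ j * e powr (k $ j)) < r $ i"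
    apply (rule eventually_all_finite)
    apply (rule order_tendstoD(2)[OF lim])
    using A1 r_def by auto
  then obtain b :: real where b: "b > 0"
    and bP: "\<And>e. e > 0 \<Longrightarrow> e < b \<Longrightarrow> \<forall>i. (\<Sum>j\<in>UNIV. \<bar>M $ i $ j\<bar> * C $ j * e powr (k $ j)) < r $ i"
    unfolding eventually_at_right_field by auto
  show ?thesis
  proof (intro exI[of _ "b/2"] conjI allI impI)
    show "b / 2 > 0" using b by simp
    fix e :: real and \<theta> :: "real \<Rightarrow> real^'d" and i
    assume e: "0 < e \<and> e \<le> b / 2"
      and sol0: "solves_lv (transpose X ** X) (transpose X *v y) (\<chi> i. C $ i * e powr (k $ i)) \<theta>"
    define \<theta>0 where "\<theta>0 = (\<chi> i. C $ i * e powr (k $ i))"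
    have sol: "solves_lv M r \<theta>0 \<theta>" using sol0 unfolding M_def r_def \<theta>0_def .
    have p0: "\<forall>i. \<theta>0 $ i > 0" using Cpos e unfolding \<theta>0_def by simp
    have g0: "\<forall>i. r $ i - (\<Sum>j\<in>UNIV. M $ i $ j * \<theta>0 $ j) > 0"
    proof
      fix i
      have "(\<Sum>j\<in>UNIV. M $ i $ j * \<theta>0 $ j) \<le> (\<Sum>j\<in>UNIV. \<bar>M $ i $ j\<bar> * C $ j * e powr (k $ j))"
      proof (rule sum_mono)
        fix j
        have "M $ i $ j * (C $ j * e powr (k $ j)) \<le> \<bar>M $ i $ j\<bar> * (C $ j * e powr (k $ j))"
          using p0[rule_format, of j] unfolding \<theta>0_def by (intro mult_right_mono) auto
        then show "M $ i $ j * \<theta>0 $ j \<le> \<bar>M $ i $ j\<bar> * C $ j * e powr (k $ j)"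
          unfolding \<theta>0_def by (simp add: mult.assoc)
      qed
      also have "\<dots> < r $ i" using bP[of e] e b by auto
      finally show "r $ i - (\<Sum>j\<in>UNIV. M $ i $ j * \<theta>0 $ j) > 0" by simp
    qed
    have off: "\<forall>i j. i \<noteq> j \<longrightarrow> M $ i $ j \<le> 0" using A2 M_def by simp
    note inv = main_inv[OF off p0 g0 sol]
    show "mono_on {0..} (\<lambda>t. \<theta> t $ i)"
    proof (rule mono_onI)
      fix s t :: real assume st: "s \<in> {0..}" "t \<in> {0..}" "s \<le> t"
      show "\<theta> s $ i \<le> \<theta> t $ i"
      proof (rule incr_helper[where f="\<lambda>t. \<theta> t $ i"
            and f'="\<lambda>t. \<theta> t $ i * (r $ i - (\<Sum>j\<in>UNIV. M $ i $ j * \<theta> t $ j))"])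
        show "s \<le> t" "0 \<le> s" using st by auto
        show "((\<lambda>t. \<theta> t $ i) has_real_derivative
            \<theta> x $ i * (r $ i - (\<Sum>j\<in>UNIV. M $ i $ j * \<theta> x $ j))) (at x within {0..})"
          if "s \<le> x" "x \<le> t" for x
          using comp_deriv[of \<theta> M r x "{0..}" i] sol that st unfolding solves_lv_def by auto
        show "0 \<le> \<theta> x $ i * (r $ i - (\<Sum>j\<in>UNIV. M $ i $ j * \<theta> x $ j))"
          if "s < x" "x < t" for x
          using inv that st by (auto intro: mult_nonneg_nonneg less_imp_le)
      qed
    qed
  qed
qed

end
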